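(* Let $G=(V,E)$ be an essentially 4-edge-connected graph with minimum degree three and let $T$ be a spanning tree of $G$ with root $r$ such that $L=E\setminus T$ contains no leaf-matching links for $T$. Then there is an admissible top-down coloring algorithm with factor $\frac{3}{5}$ on the links in $L$.
   Context: $G$ is essentially 4-edge-connected if $|\delta(S)|\ge4$ for all $S\subseteq V$ with $2\le|S|\le|V|-2$. An edge $uv\in L$ is a leaf-matching link for $T$ if $u$ and $v$ both have degree one in $T$ and $u,v\neq r$. Elements of $L$ are called links. For a link $\ell$, $P_\ell$ is the path in $T$ between its endpoints; for $e\in T$, $\mathrm{cov}(e)=\{\ell\in L: e\in P_\ell\}$. Orient $T$ away from $r$; the LCA of a link $uv$ is the least common ancestor of $u$ and $v$ in the rooted tree, and an LCA is higher if it is closer to $r$. A naive coloring algorithm with factor $\frac{p}{q}$ processes the links one at a time and assigns to each link a set of $p$ distinct colors from a fixed set of $q$ colors $\{c_1,\dots,c_q\}$. In a partial coloring, a tree edge $e\in T$ has received color $c$ if some already colored link $\ell$ with $e\in P_\ell$ has $c$ among its colors. A top-down coloring algorithm with factor $\frac{p}{q}$ is a naive coloring algorithm with factor $\frac{p}{q}$ that colors a link only after all links with higher LCA have been colored. It is admissible if for every edge $e\in T$ and every partial coloring arising during the algorithm in which all links of $\mathrm{cov}(e)$ are colored, $e$ has received all $q$ colors. *)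

theory Defs
  imports Main
begin

definition graph :: "'a set \<Rightarrow> 'a set set \<Rightarrow> bool" where
  "graph V E \<longleftrightarrow> finite V \<and> (\<forall>e\<in>E. \<exists>u v. e = {u, v} \<and> u \<noteq> v \<and> u \<in> V \<and> v \<in> V)"

definition deg :: "'a set set \<Rightarrow> 'a \<Rightarrow> nat" where
  "deg F v = card {e\<in>F. v \<in> e}"

definition cut :: "'a set set \<Rightarrow> 'a set \<Rightarrow> 'a set set" where
  "cut E S = {e\<in>E. card (e \<inter> S) = 1}"

definition ess_4_edge_connected :: "'a set \<Rightarrow> 'a set set \<Rightarrow> bool" where
  "ess_4_edge_connected V E \<longleftrightarrow>
     (\<forall>S. S \<subseteq> V \<and> 2 \<le> card S \<and> card S \<le> card V - 2 \<longrightarrow> card (cut E S) \<ge> 4)"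

definition min_degree_ge :: "'a set \<Rightarrow> 'a set set \<Rightarrow> nat \<Rightarrow> bool" where
  "min_degree_ge V E k \<longleftrightarrow> (\<forall>v\<in>V. deg E v \<ge> k)"

definition spath :: "'a set set \<Rightarrow> 'a list \<Rightarrow> bool" where
  "spath F xs \<longleftrightarrow> xs \<noteq> [] \<and> distinct xs \<and>
     (\<forall>i. Suc i < length xs \<longrightarrow> {xs ! i, xs ! Suc i} \<in> F)"

definition path_edges :: "'a list \<Rightarrow> 'a set set" where
  "path_edges xs = {{xs ! i, xs ! Suc i} | i. Suc i < length xs}"

definition connected_in :: "'a set set \<Rightarrow> 'a \<Rightarrow> 'a \<Rightarrow> bool" where
  "connected_in F u v \<longleftrightarrow> (\<exists>xs. spath F xs \<and> hd xs = u \<and> last xs = v)"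

text \<open>Spanning tree: a connected spanning subgraph which is minimally connected
  (removing any edge disconnects its endpoints), i.e. connected and acyclic.\<close>
definition spanning_tree :: "'a set \<Rightarrow> 'a set set \<Rightarrow> 'a set set \<Rightarrow> bool" where
  "spanning_tree V E T \<longleftrightarrow> T \<subseteq> E \<and>
     (\<forall>u\<in>V. \<forall>v\<in>V. connected_in T u v) \<and>
     (\<forall>e\<in>T. \<forall>u v. e = {u, v} \<longrightarrow> \<not> connected_in (T - {e}) u v)"

definition tree_path :: "'a set set \<Rightarrow> 'a \<Rightarrow> 'a \<Rightarrow> 'a list" where
  "tree_path T u v = (THE xs. spath T xs \<and> hd xs = u \<and> last xs = v)"

definition link_path :: "'a set set \<Rightarrow> 'a set \<Rightarrow> 'a set set" where
  "link_path T l = {e. \<exists>u v. l = {u, v} \<and> e \<in> path_edges (tree_path T u v)}"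

definition cov :: "'a set set \<Rightarrow> 'a set set \<Rightarrow> 'a set \<Rightarrow> 'a set set" where
  "cov T L e = {l\<in>L. e \<in> link_path T l}"

definition depth :: "'a set set \<Rightarrow> 'a \<Rightarrow> 'a \<Rightarrow> nat" where
  "depth T r v = length (tree_path T r v) - 1"

definition ancestor :: "'a set set \<Rightarrow> 'a \<Rightarrow> 'a \<Rightarrow> 'a \<Rightarrow> bool" where
  "ancestor T r a v \<longleftrightarrow> a \<in> set (tree_path T r v)"

definition lca :: "'a set set \<Rightarrow> 'a \<Rightarrow> 'a \<Rightarrow> 'a \<Rightarrow> 'a" where
  "lca T r u v = (THE a. ancestor T r a u \<and> ancestor T r a v \<and>
      (\<forall>b. ancestor T r b u \<and> ancestor T r b v \<longrightarrow> depth T r b \<le> depth T r a))"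

definition higher_lca :: "'a set set \<Rightarrow> 'a \<Rightarrow> 'a set \<Rightarrow> 'a set \<Rightarrow> bool" where
  "higher_lca T r l' l \<longleftrightarrow> (\<exists>u v u' v'. l = {u, v} \<and> l' = {u', v'} \<and>
      depth T r (lca T r u' v') < depth T r (lca T r u v))"

definition leaf_matching_link :: "'a set set \<Rightarrow> 'a \<Rightarrow> 'a set \<Rightarrow> bool" where
  "leaf_matching_link T r l \<longleftrightarrow> (\<exists>u v. l = {u, v} \<and> deg T u = 1 \<and> deg T v = 1 \<and> u \<noteq> r \<and> v \<noteq> r)"

text \<open>A run of a naive coloring algorithm with factor p/q on the link set L is
  given by the order \<open>ord\<close> in which the links are processed and the set of
  colors \<open>col l\<close> (p distinct colors out of {1..q}) assigned to each link l.
  The partial colorings arising during the run are those after the first k links.\<close>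
definition naive_coloring :: "'a set set \<Rightarrow> nat \<Rightarrow> nat \<Rightarrow> 'a set list \<Rightarrow> ('a set \<Rightarrow> nat set) \<Rightarrow> bool" where
  "naive_coloring L p q ord col \<longleftrightarrow> distinct ord \<and> set ord = L \<and>
     (\<forall>l\<in>L. col l \<subseteq> {1..q} \<and> card (col l) = p)"

definition top_down :: "'a set set \<Rightarrow> 'a \<Rightarrow> 'a set list \<Rightarrow> bool" where
  "top_down T r ord \<longleftrightarrow> (\<forall>i j. i < length ord \<and> j < length ord \<and>
      higher_lca T r (ord ! i) (ord ! j) \<longrightarrow> i < j)"

definition received :: "'a set set \<Rightarrow> 'a set set \<Rightarrow> ('a set \<Rightarrow> nat set) \<Rightarrow> 'a set set \<Rightarrow> 'a set \<Rightarrow> nat set" where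
  "received T L col C e = (\<Union>l\<in>cov T L e \<inter> C. col l)"

definition admissible :: "'a set set \<Rightarrow> 'a set set \<Rightarrow> nat \<Rightarrow> 'a set list \<Rightarrow> ('a set \<Rightarrow> nat set) \<Rightarrow> bool" where
  "admissible T L q ord col \<longleftrightarrow> (\<forall>e\<in>T. \<forall>k\<le>length ord.
      cov T L e \<subseteq> set (take k ord) \<longrightarrow> received T L col (set (take k ord)) e = {1..q})"

definition admissible_top_down_coloring ::
  "'a set set \<Rightarrow> 'a \<Rightarrow> 'a set set \<Rightarrow> nat \<Rightarrow> nat \<Rightarrow> 'a set list \<Rightarrow> ('a set \<Rightarrow> nat set) \<Rightarrow> bool" where
  "admissible_top_down_coloring T r L p q ord col \<longleftrightarrow>
     naive_coloring L p q ord col \<and> top_down T r ord \<and> admissible T L q ord col"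

end

theory Submission
  imports Defs
begin


lemma card3_obtain:
  assumes "3 \<le> card R"
  obtains x y z where "x \<in> R" "y \<in> R" "z \<in> R" "x \<noteq> y" "x \<noteq> z" "y \<noteq> z"
proof -
  from assms obtain x B where B: "R = insert x B" "x \<notin> B" "2 \<le> card B" "finite B"
    using card_le_Suc_iff[of 2 R] by (auto simp: numeral_3_eq_3)
  from B(3) obtain y D where D: "B = insert y D" "y \<notin> D" "1 \<le> card D" "finite D"
    using card_le_Suc_iff[of 1 B] by (auto simp: numeral_2_eq_2)
  from D(3) obtain z where "z \<in> D" by (metis card.empty ex_in_conv not_one_le_zero)
  then show ?thesis using that B D by blast
qed

lemma card2_obtain:
  assumes "2 \<le> card R"
  obtains x y where "x \<in> R" "y \<in> R" "x \<noteq> y"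
proof -
  from assms obtain x B where B: "R = insert x B" "x \<notin> B" "1 \<le> card B" "finite B"
    using card_le_Suc_iff[of 1 R] by (auto simp: numeral_2_eq_2)
  from B(3) obtain y where "y \<in> B" by (metis card.empty ex_in_conv not_one_le_zero)
  then show ?thesis using that B by blast
qed

lemma two_sets_inter:
  assumes "card p = 2" "card q = (2::nat)" "p \<noteq> q"
  shows "card (p \<inter> q) \<le> 1"
proof (rule ccontr)
  assume "\<not> card (p \<inter> q) \<le> 1"
  hence c: "card (p \<inter> q) \<ge> 2" by simp
  have fp: "finite p" "finite q" using assms by (auto intro: card_ge_0_finite)
  have "p \<inter> q = p" using card_subset_eq[of p "p \<inter> q"] fp c assms
    by (metis Int_lower1 card_mono finite_Int le_antisym)
  moreover have "p \<inter> q = q" using card_subset_eq[of q "p \<inter> q"] fp c assms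
    by (metis Int_lower2 card_mono finite_Int le_antisym)
  ultimately show False using assms by auto
qed

lemma pick:
  fixes F1 F2 :: "nat set"
  assumes "F1 \<subseteq> {1..5}" "F2 \<subseteq> {1..5}" "card F1 \<le> 2" "card F2 \<le> 2"
    and "\<not> (2 \<le> card F1 \<and> 2 \<le> card F2)"
    and "\<forall>w1\<in>W1. \<forall>w2\<in>W1. w1 = w2" "\<forall>w1\<in>W2. \<forall>w2\<in>W2. w1 = w2"
    and "\<forall>w\<in>W1. F1 \<subseteq> w" "\<forall>w\<in>W2. F2 \<subseteq> w"
  shows "\<exists>p. p \<subseteq> {1..5} \<and> card p = 2 \<and> p \<inter> (F1 \<union> F2) = {} \<and> p \<notin> W1 \<and> p \<notin> W2"
proof -
  have fin: "finite F1" "finite F2" using assms(1,2) finite_subset by auto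
  have gen: "p \<notin> W" if "F \<noteq> {}" "p \<inter> F = {}" "\<forall>w\<in>W. F \<subseteq> w" for p F and W :: "nat set set"
    using that by blast
  obtain w1 where w1: "W1 \<subseteq> {w1}" using assms(6) by blast
  obtain w2 where w2: "W2 \<subseteq> {w2}" using assms(7) by blast
  show ?thesis
  proof (cases "F1 = {}")
    case True
    show ?thesis
    proof (cases "F2 = {}")
      case True
      have "{1,2} \<notin> W1 \<union> W2 \<or> {3,4} \<notin> W1 \<union> W2 \<or> {1,3::nat} \<notin> W1 \<union> W2"
      proof -
        have ne: "{1,2::nat} \<noteq> {3,4}" "{1,2} \<noteq> {1,3::nat}" "{3,4} \<noteq> {1,3::nat}"
          by (auto simp: doubleton_eq_iff)
        show ?thesis using w1 w2 ne by blast
      qed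
      then obtain p where p: "p \<in> {{1,2},{3,4},{1,3::nat}}" "p \<notin> W1 \<union> W2" by blast
      have "p \<subseteq> {1..5} \<and> card p = 2" using p(1) by auto
      then show ?thesis using \<open>F1 = {}\<close> True p(2) by blast
    next
      case False
      have "card ({1..5} - F2) = 5 - card F2" using assms(2) by (simp add: card_Diff_subset fin)
      hence "3 \<le> card ({1..5::nat} - F2)" using assms(4) by simp
      then obtain x y z where xyz: "x \<in> {1..5} - F2" "y \<in> {1..5} - F2" "z \<in> {1..5} - F2"
        "x \<noteq> y" "x \<noteq> z" "y \<noteq> z" by (rule card3_obtain)
      have ne3: "{x,y} \<noteq> {x,z}" "{x,y} \<noteq> {y,z}" "{x,z} \<noteq> {y,z}"
        using xyz(4-6) by (simp_all add: doubleton_eq_iff)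
      have "\<exists>p\<in>{{x,y},{x,z},{y,z}}. p \<notin> W1" using w1 ne3 by blast
      then obtain p where p: "p \<in> {{x,y},{x,z},{y,z}}" "p \<notin> W1" by blast
      have "p \<subseteq> {1..5}" "card p = 2" "p \<inter> F2 = {}" using p xyz by auto
      moreover have "p \<notin> W2" using gen[OF False \<open>p \<inter> F2 = {}\<close>] assms(9) by blast
      ultimately show ?thesis using \<open>F1 = {}\<close> p by blast
    qed
  next
    case F1: False
    show ?thesis
    proof (cases "F2 = {}")
      case True
      have "card ({1..5} - F1) = 5 - card F1" using assms(1) by (simp add: card_Diff_subset fin)
      hence "3 \<le> card ({1..5::nat} - F1)" using assms(3) by simp
      then obtain x y z where xyz: "x \<in> {1..5} - F1" "y \<in> {1..5} - F1" "z \<in> {1..5} - F1"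
        "x \<noteq> y" "x \<noteq> z" "y \<noteq> z" by (rule card3_obtain)
      have ne3: "{x,y} \<noteq> {x,z}" "{x,y} \<noteq> {y,z}" "{x,z} \<noteq> {y,z}"
        using xyz(4-6) by (simp_all add: doubleton_eq_iff)
      have "\<exists>p\<in>{{x,y},{x,z},{y,z}}. p \<notin> W2" using w2 ne3 by blast
      then obtain p where p: "p \<in> {{x,y},{x,z},{y,z}}" "p \<notin> W2" by blast
      have "p \<subseteq> {1..5}" "card p = 2" "p \<inter> F1 = {}" using p xyz by auto
      moreover have "p \<notin> W1" using gen[OF F1 \<open>p \<inter> F1 = {}\<close>] assms(8) by blast
      ultimately show ?thesis using True p by blast
    next
      case F2: False
      have "card (F1 \<union> F2) \<le> 3" using assms(3-5) card_Un_le[of F1 F2] by linarith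
      have "card ({1..5} - (F1 \<union> F2)) = 5 - card (F1 \<union> F2)" using assms(1,2)
        by (simp add: card_Diff_subset fin)
      hence "2 \<le> card ({1..5::nat} - (F1 \<union> F2))" using \<open>card (F1 \<union> F2) \<le> 3\<close> by simp
      then obtain x y where xy: "x \<in> {1..5} - (F1 \<union> F2)" "y \<in> {1..5} - (F1 \<union> F2)" "x \<noteq> y"
        by (rule card2_obtain)
      let ?p = "{x,y}"
      have "?p \<subseteq> {1..5}" "card ?p = 2" "?p \<inter> (F1 \<union> F2) = {}" using xy by auto
      moreover have "?p \<notin> W1" using gen[OF F1, of ?p] assms(8) xy by blast
      moreover have "?p \<notin> W2" using gen[OF F2, of ?p] assms(9) xy by blast
      ultimately show ?thesis by blast
    qed
  qed
qed

lemma sorted_list_ex: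
  fixes kap :: "'c \<Rightarrow> nat"
  assumes "finite L"
  obtains ys where "distinct ys" "set ys = L" "sorted (map kap ys)"
proof -
  obtain xs where xs: "set xs = L" "distinct xs" using finite_distinct_list[OF assms] by blast
  show ?thesis by (rule that[of "sort_key kap xs"]) (use xs in auto)
qed

lemma nth_notin_take:
  assumes "distinct ys" "n < length ys"
  shows "ys ! n \<notin> set (take n ys)"
proof
  assume "ys ! n \<in> set (take n ys)"
  then obtain i where i: "i < length (take n ys)" "take n ys ! i = ys ! n" by (auto simp: in_set_conv_nth)
  then have "i < n" "ys ! i = ys ! n" using assms by auto
  then show False using assms nth_eq_iff_index_eq[of ys i n] by auto
qed

locale core =
  fixes L :: "'a set set" and T :: "'b set" and S :: "'b \<Rightarrow> 'a set"
  assumes finL: "finite L" and finT: "finite T"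
  and two: "\<And>l. l \<in> L \<Longrightarrow> \<exists>u v. l = {u,v} \<and> u \<noteq> v"
  and lam: "\<And>e f. e\<in>T \<Longrightarrow> f\<in>T \<Longrightarrow> S e \<inter> S f \<noteq> {} \<Longrightarrow> S e \<subseteq> S f \<or> S f \<subseteq> S e"
  and cv2: "\<And>e. e\<in>T \<Longrightarrow> 2 \<le> card {l\<in>L. card (l \<inter> S e) = 1}"
  and leaf: "\<And>l e f. e\<in>T \<Longrightarrow> f\<in>T \<Longrightarrow> l \<in> L \<Longrightarrow> card (l \<inter> S e) = 1 \<Longrightarrow> card (l \<inter> S f) = 1
     \<Longrightarrow> card {l\<in>L. card (l \<inter> S e) = 1} = 2 \<Longrightarrow> card {l\<in>L. card (l \<inter> S f) = 1} = 2
     \<Longrightarrow> l \<inter> S e = l \<inter> S f"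
begin

definition cv where "cv e = {l\<in>L. card (l \<inter> S e) = 1}"
definition kap where "kap l = card {e\<in>T. l \<subseteq> S e}"
definition common :: "'a set set \<Rightarrow> ('a set \<Rightarrow> nat set) \<Rightarrow> nat set" where
  "common A \<pi> = {c\<in>{1..5}. \<forall>a\<in>A. c \<in> \<pi> a}"
definition Inv where
  "Inv C \<pi> \<longleftrightarrow> (\<forall>a\<in>C. \<pi> a \<subseteq> {1..5} \<and> card (\<pi> a) = 2) \<and>
     (\<forall>e\<in>T. 2 \<le> card (cv e \<inter> C) \<longrightarrow> card (common (cv e \<inter> C) \<pi>) \<le> 1) \<and>
     (\<forall>e\<in>T. cv e \<subseteq> C \<longrightarrow> common (cv e) \<pi> = {})"

lemma finite_cv: "finite (cv e)" using finL by (simp add: cv_def)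

lemma common_sub: "common A \<pi> \<subseteq> {1..5}" by (auto simp: common_def)
lemma finite_common: "finite (common A \<pi>)" using common_sub finite_subset by blast
lemma common_anti: "A \<subseteq> B \<Longrightarrow> common B \<pi> \<subseteq> common A \<pi>" by (auto simp: common_def)
lemma common_mem: "a \<in> A \<Longrightarrow> common A \<pi> \<subseteq> \<pi> a" by (auto simp: common_def)
lemma common_upd: "l \<notin> A \<Longrightarrow> common A (\<pi>(l:=p)) = common A \<pi>" by (auto simp: common_def)
lemma common_upd_ins: "l \<notin> A \<Longrightarrow> common (insert l A) (\<pi>(l:=p)) = p \<inter> common A \<pi>"
  by (auto simp: common_def)

lemma nest:
  assumes "e\<in>T" "f\<in>T" "l\<in>L" "l = {u,v}" "u\<noteq>v" "l \<inter> S e = {u}" "l \<inter> S f = {u}" "S e \<subseteq> S f"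
    "l' \<in> L" "kap l' \<le> kap l" "card (l' \<inter> S e) = 1"
  shows "card (l' \<inter> S f) = 1"
proof (rule ccontr)
  assume ne: "card (l' \<inter> S f) \<noteq> 1"
  obtain w w' where l': "l' = {w,w'}" "w\<noteq>w'" using two assms(9) by blast
  have "l' \<inter> S e \<noteq> {}" using assms(11) by auto
  hence ne2: "l' \<inter> S f \<noteq> {}" using assms(8) by blast
  have "w \<in> S f \<and> w' \<in> S f"
  proof (cases "w \<in> S f"; cases "w' \<in> S f")
    assume "w \<in> S f" "w' \<notin> S f" then have "l' \<inter> S f = {w}" using l' by auto
    then show ?thesis using ne by simp
  next
    assume "w \<notin> S f" "w' \<in> S f" then have "l' \<inter> S f = {w'}" using l' by auto
    then show ?thesis using ne by simp
  next
    assume "w \<notin> S f" "w' \<notin> S f" then have "l' \<inter> S f = {}" using l' by auto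
    then show ?thesis using ne2 by simp
  qed simp
  hence lS: "l' \<subseteq> S f" using l' by auto
  have vnot: "v \<notin> S f" using assms(4,5,7) by auto
  have sub: "{g\<in>T. l \<subseteq> S g} \<subseteq> {g\<in>T. l' \<subseteq> S g}"
  proof safe
    fix g x assume g: "g\<in>T" "l \<subseteq> S g" "x \<in> l'"
    have "u \<in> S g \<inter> S f" using assms(4,7) g(2) by auto
    hence "S g \<subseteq> S f \<or> S f \<subseteq> S g" using lam g(1) assms(2) by blast
    moreover have "\<not> S g \<subseteq> S f" using g(2) assms(4) vnot by auto
    ultimately show "x \<in> S g" using lS g(3) by blast
  qed
  have "f \<in> {g\<in>T. l' \<subseteq> S g}" "f \<notin> {g\<in>T. l \<subseteq> S g}" using assms(2,4) lS vnot by auto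
  hence "{g\<in>T. l \<subseteq> S g} \<subset> {g\<in>T. l' \<subseteq> S g}" using sub by blast
  hence "kap l < kap l'" unfolding kap_def by (rule psubset_card_mono[rotated]) (use finT in auto)
  thus False using assms(10) by simp
qed

lemma chain:
  assumes "l\<in>L" "l={u,v}" "u\<noteq>v" "C \<subseteq> L" "\<forall>l'\<in>C. kap l' \<le> kap l" "e\<in>T" "f\<in>T"
    "l\<inter>S e = {u}" "l\<inter>S f = {u}"
  shows "cv e \<inter> C \<subseteq> cv f \<inter> C \<or> cv f \<inter> C \<subseteq> cv e \<inter> C"
proof -
  have "S e \<inter> S f \<noteq> {}" using assms(8,9) by blast
  then have "S e \<subseteq> S f \<or> S f \<subseteq> S e" using lam assms(6,7) by blast
  then show ?thesis
  proof
    assume "S e \<subseteq> S f"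
    have "cv e \<inter> C \<subseteq> cv f \<inter> C"
      using nest[OF assms(6,7,1,2,3,8,9) \<open>S e \<subseteq> S f\<close>] assms(4,5) unfolding cv_def by blast
    then show ?thesis ..
  next
    assume "S f \<subseteq> S e"
    have "cv f \<inter> C \<subseteq> cv e \<inter> C"
      using nest[OF assms(7,6,1,2,3,9,8) \<open>S f \<subseteq> S e\<close>] assms(4,5) unfolding cv_def by blast
    then show ?thesis ..
  qed
qed

end

context core begin

lemma group:
  assumes chainG: "\<forall>e\<in>G. \<forall>f\<in>G. cv e \<inter> C \<subseteq> cv f \<inter> C \<or> cv f \<inter> C \<subseteq> cv e \<inter> C"
  and GT: "G \<subseteq> T" and lG: "\<forall>e\<in>G. l \<in> cv e" and lC: "l \<notin> C" and inv: "Inv C \<pi>"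
  and W_def: "W = {\<pi> a | a. \<exists>e\<in>G. cv e \<inter> C = {a}}"
  and F_def: "F = (\<Union>e\<in>{e\<in>G. cv e - {l} \<subseteq> C}. common (cv e \<inter> C) \<pi>)"
  shows "F \<subseteq> {1..5}" "card F \<le> 2" "2 \<le> card F \<Longrightarrow> \<exists>e\<in>G. card (cv e) = 2"
    "\<forall>w1\<in>W. \<forall>w2\<in>W. w1 = w2" "\<forall>w\<in>W. F \<subseteq> w"
proof -
  show F5: "F \<subseteq> {1..5}" using common_sub F_def by blast
  have finF: "finite F" using F5 finite_subset by blast
  have lastA: "cv e \<inter> C = cv e - {l}" "cv e = insert l (cv e \<inter> C)" "l \<notin> cv e \<inter> C"
    if "e \<in> G" "cv e - {l} \<subseteq> C" for e
    using that lG lC by auto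
  have lastne: "cv e \<inter> C \<noteq> {}" if "e \<in> G" "cv e - {l} \<subseteq> C" for e
  proof
    assume "cv e \<inter> C = {}"
    then have "cv e = {l}" using lastA(2)[OF that] by simp
    then show False using cv2[of e] that GT unfolding cv_def by auto
  qed
  have cardlast: "card (cv e) = Suc (card (cv e \<inter> C))" if "e \<in> G" "cv e - {l} \<subseteq> C" for e
  proof -
    have "card (cv e) = card (insert l (cv e \<inter> C))" by (rule arg_cong[where f=card, OF lastA(2)[OF that]])
    also have "\<dots> = Suc (card (cv e \<inter> C))" using lastA(3)[OF that] finite_cv by simp
    finally show ?thesis .
  qed
  have memA: "a \<in> cv e \<inter> C" if "e \<in> G" "cv e - {l} \<subseteq> C" "f \<in> G" "cv f \<inter> C = {a}" for e f a
  proof -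
    have "cv e \<inter> C \<subseteq> cv f \<inter> C \<or> cv f \<inter> C \<subseteq> cv e \<inter> C" by (rule chainG[rule_format, OF that(1,3)])
    then show ?thesis using that(4) lastne[OF that(1,2)] by auto
  qed
  show "\<forall>w1\<in>W. \<forall>w2\<in>W. w1 = w2"
  proof (intro ballI)
    fix w1 w2 assume "w1 \<in> W" "w2 \<in> W"
    then obtain a1 a2 e1 e2 where ee: "w1 = \<pi> a1" "w2 = \<pi> a2" "e1 \<in> G" "e2 \<in> G"
      "cv e1 \<inter> C = {a1}" "cv e2 \<inter> C = {a2}" using W_def by blast
    have "{a1} \<subseteq> {a2} \<or> {a2} \<subseteq> {a1}" using chainG[rule_format, OF ee(3,4)] ee(5,6) by simp
    then show "w1 = w2" using ee(1,2) by auto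
  qed
  show "\<forall>w\<in>W. F \<subseteq> w"
  proof
    fix w assume "w \<in> W"
    then obtain a f where af: "w = \<pi> a" "f \<in> G" "cv f \<inter> C = {a}" using W_def by blast
    show "F \<subseteq> w"
    proof
      fix c assume "c \<in> F"
      then obtain e where e: "e \<in> G" "cv e - {l} \<subseteq> C" "c \<in> common (cv e \<inter> C) \<pi>" using F_def by blast
      have "a \<in> cv e \<inter> C" using memA[OF e(1,2) af(2,3)] .
      then show "c \<in> w" using common_mem e(3) af(1) by blast
    qed
  qed
  have caseA: "card F \<le> 1" if A: "\<forall>e\<in>G. cv e - {l} \<subseteq> C \<longrightarrow> 2 \<le> card (cv e \<inter> C)"
  proof -
    have "\<forall>c\<in>F. \<forall>d\<in>F. c = d"
    proof (intro ballI)
      fix c d assume "c \<in> F" "d \<in> F"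
      then obtain e f where e: "e \<in> G" "cv e - {l} \<subseteq> C" "c \<in> common (cv e \<inter> C) \<pi>"
        and f: "f \<in> G" "cv f - {l} \<subseteq> C" "d \<in> common (cv f \<inter> C) \<pi>" using F_def by blast
      have inv2: "card (common (cv g \<inter> C) \<pi>) \<le> 1" if "g \<in> G" "cv g - {l} \<subseteq> C" for g
        using inv A that GT unfolding Inv_def by blast
      show "c = d"
      proof (cases "cv e \<inter> C \<subseteq> cv f \<inter> C")
        case True
        then have d: "d \<in> common (cv e \<inter> C) \<pi>" by (rule subsetD[OF common_anti f(3)])
        have "\<forall>x\<in>common (cv e \<inter> C) \<pi>. \<forall>y\<in>common (cv e \<inter> C) \<pi>. x = y"
          using card_le_Suc0_iff_eq[OF finite_common] inv2[OF e(1,2)] by simp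
        then show ?thesis using e(3) d by blast
      next
        case False
        then have "cv f \<inter> C \<subseteq> cv e \<inter> C" using chainG[rule_format, OF e(1) f(1)] by blast
        then have c: "c \<in> common (cv f \<inter> C) \<pi>" by (rule subsetD[OF common_anti e(3)])
        have "\<forall>x\<in>common (cv f \<inter> C) \<pi>. \<forall>y\<in>common (cv f \<inter> C) \<pi>. x = y"
          using card_le_Suc0_iff_eq[OF finite_common] inv2[OF f(1,2)] by simp
        then show ?thesis using f(3) c by blast
      qed
    qed
    then show ?thesis using card_le_Suc0_iff_eq[OF finF] by simp
  qed
  have caseB: "card F \<le> 2 \<and> card (cv e0) = 2"
    if B: "e0 \<in> G" "cv e0 - {l} \<subseteq> C" "\<not> 2 \<le> card (cv e0 \<inter> C)" for e0
  proof -
    have "card (cv e0 \<inter> C) \<noteq> 0" using lastne[OF B(1,2)] finite_cv by simp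
    then have c1: "card (cv e0 \<inter> C) = 1" using B(3) by simp
    then obtain a0 where a0: "cv e0 \<inter> C = {a0}" by (rule card_1_singletonE)
    have "a0 \<in> C" using a0 by blast
    then have ca0: "card (\<pi> a0) = 2" using inv unfolding Inv_def by blast
    have "F \<subseteq> \<pi> a0"
    proof
      fix c assume "c \<in> F"
      then obtain e where e: "e \<in> G" "cv e - {l} \<subseteq> C" "c \<in> common (cv e \<inter> C) \<pi>" using F_def by blast
      have "a0 \<in> cv e \<inter> C" using memA[OF e(1,2) B(1) a0] .
      then show "c \<in> \<pi> a0" using common_mem e(3) by blast
    qed
    then have "card F \<le> 2" using ca0 card_mono by (metis card.infinite zero_neq_numeral)
    moreover have "card (cv e0) = 2" using cardlast[OF B(1,2)] c1 by simp
    ultimately show ?thesis by simp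
  qed
  show "card F \<le> 2"
  proof (cases "\<forall>e\<in>G. cv e - {l} \<subseteq> C \<longrightarrow> 2 \<le> card (cv e \<inter> C)")
    case True then show ?thesis using caseA by simp
  next
    case False then show ?thesis using caseB by blast
  qed
  show "\<exists>e\<in>G. card (cv e) = 2" if "2 \<le> card F"
  proof (cases "\<forall>e\<in>G. cv e - {l} \<subseteq> C \<longrightarrow> 2 \<le> card (cv e \<inter> C)")
    case True then show ?thesis using caseA that by simp
  next
    case False then show ?thesis using caseB by blast
  qed
qed

end

context core begin

lemma step:
  assumes CL: "C \<subseteq> L" and lL: "l\<in>L" and lC: "l\<notin>C" and kp: "\<forall>l'\<in>C. kap l' \<le> kap l"
    and inv: "Inv C \<pi>"
  shows "\<exists>p. Inv (insert l C) (\<pi>(l:=p))"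
proof -
  obtain u v where uv: "l={u,v}" "u\<noteq>v" using two lL by blast
  have lv: "l = {v,u}" "v \<noteq> u" using uv by auto
  define Gu where "Gu = {e\<in>T. l\<in>cv e \<and> l\<inter>S e = {u}}"
  define Gv where "Gv = {e\<in>T. l\<in>cv e \<and> l\<inter>S e = {v}}"
  have chu: "\<forall>e\<in>Gu. \<forall>f\<in>Gu. cv e \<inter> C \<subseteq> cv f \<inter> C \<or> cv f \<inter> C \<subseteq> cv e \<inter> C"
    by (intro ballI, rule chain[OF lL uv CL kp]) (auto simp: Gu_def)
  have chv: "\<forall>e\<in>Gv. \<forall>f\<in>Gv. cv e \<inter> C \<subseteq> cv f \<inter> C \<or> cv f \<inter> C \<subseteq> cv e \<inter> C"
    by (intro ballI, rule chain[OF lL lv CL kp]) (auto simp: Gv_def)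
  define Wu where "Wu = {\<pi> a | a. \<exists>e\<in>Gu. cv e \<inter> C = {a}}"
  define Wv where "Wv = {\<pi> a | a. \<exists>e\<in>Gv. cv e \<inter> C = {a}}"
  define Fu where "Fu = (\<Union>e\<in>{e\<in>Gu. cv e - {l} \<subseteq> C}. common (cv e \<inter> C) \<pi>)"
  define Fv where "Fv = (\<Union>e\<in>{e\<in>Gv. cv e - {l} \<subseteq> C}. common (cv e \<inter> C) \<pi>)"
  have gu: "Fu \<subseteq> {1..5}" "card Fu \<le> 2" "2 \<le> card Fu \<Longrightarrow> \<exists>e\<in>Gu. card (cv e) = 2"
    "\<forall>w1\<in>Wu. \<forall>w2\<in>Wu. w1 = w2" "\<forall>w\<in>Wu. Fu \<subseteq> w"
    by (rule group[OF chu _ _ lC inv Wu_def Fu_def]; auto simp: Gu_def)+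
  have gv: "Fv \<subseteq> {1..5}" "card Fv \<le> 2" "2 \<le> card Fv \<Longrightarrow> \<exists>e\<in>Gv. card (cv e) = 2"
    "\<forall>w1\<in>Wv. \<forall>w2\<in>Wv. w1 = w2" "\<forall>w\<in>Wv. Fv \<subseteq> w"
    by (rule group[OF chv _ _ lC inv Wv_def Fv_def]; auto simp: Gv_def)+
  have notboth: "\<not> (2 \<le> card Fu \<and> 2 \<le> card Fv)"
  proof
    assume "2 \<le> card Fu \<and> 2 \<le> card Fv"
    then obtain e f where e: "e \<in> Gu" "card (cv e) = 2" and f: "f \<in> Gv" "card (cv f) = 2"
      using gu(3) gv(3) by blast
    have "l \<inter> S e = l \<inter> S f"
      using leaf[of e f l] e f lL unfolding Gu_def Gv_def cv_def by auto
    then show False using e(1) f(1) uv(2) unfolding Gu_def Gv_def by auto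
  qed
  obtain p where p: "p \<subseteq> {1..5}" "card p = 2" "p \<inter> (Fu \<union> Fv) = {}" "p \<notin> Wu" "p \<notin> Wv"
    using pick[OF gu(1) gv(1) gu(2) gv(2) notboth gu(4) gv(4) gu(5) gv(5)] by blast
  have split: "e \<in> Gu \<or> e \<in> Gv" if "e \<in> T" "l \<in> cv e" for e
  proof -
    have "card (l \<inter> S e) = 1" using that(2) unfolding cv_def by simp
    then obtain x where x: "l \<inter> S e = {x}" by (rule card_1_singletonE)
    then have "x = u \<or> x = v" using uv by auto
    then show ?thesis using x that unfolding Gu_def Gv_def by auto
  qed
  have consA: "p \<noteq> \<pi> a" if "e \<in> T" "l \<in> cv e" "cv e \<inter> C = {a}" for e a
  proof -
    from split[OF that(1,2)] have "\<pi> a \<in> Wu \<or> \<pi> a \<in> Wv"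
    proof
      assume "e \<in> Gu" then show ?thesis unfolding Wu_def using that(3) by blast
    next
      assume "e \<in> Gv" then show ?thesis unfolding Wv_def using that(3) by blast
    qed
    then show ?thesis using p(4,5) by blast
  qed
  have consB: "p \<inter> common (cv e \<inter> C) \<pi> = {}" if "e \<in> T" "l \<in> cv e" "cv e - {l} \<subseteq> C" for e
  proof -
    from split[OF that(1,2)] have "common (cv e \<inter> C) \<pi> \<subseteq> Fu \<union> Fv"
    proof
      assume "e \<in> Gu" then have "common (cv e \<inter> C) \<pi> \<subseteq> Fu" unfolding Fu_def using that(3) by blast
      then show ?thesis by blast
    next
      assume "e \<in> Gv" then have "common (cv e \<inter> C) \<pi> \<subseteq> Fv" unfolding Fv_def using that(3) by blast
      then show ?thesis by blast
    qed
    then show ?thesis using p(3) by blast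
  qed
  have inv0: "\<forall>a\<in>C. \<pi> a \<subseteq> {1..5} \<and> card (\<pi> a) = 2"
    and inv1: "\<forall>e\<in>T. 2 \<le> card (cv e \<inter> C) \<longrightarrow> card (common (cv e \<inter> C) \<pi>) \<le> 1"
    and inv2: "\<forall>e\<in>T. cv e \<subseteq> C \<longrightarrow> common (cv e) \<pi> = {}" using inv unfolding Inv_def by blast+
  let ?\<pi> = "\<pi>(l:=p)"
  have n0: "\<forall>a\<in>insert l C. ?\<pi> a \<subseteq> {1..5} \<and> card (?\<pi> a) = 2" using inv0 p(1,2) by auto
  have n1: "card (common (cv e \<inter> insert l C) ?\<pi>) \<le> 1" if e: "e \<in> T" "2 \<le> card (cv e \<inter> insert l C)" for e
  proof (cases "l \<in> cv e")
    case False
    then have "cv e \<inter> insert l C = cv e \<inter> C" by blast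
    moreover have "l \<notin> cv e \<inter> C" using False by blast
    ultimately have "common (cv e \<inter> insert l C) ?\<pi> = common (cv e \<inter> C) \<pi>" using common_upd by metis
    moreover have "2 \<le> card (cv e \<inter> C)" using e(2) \<open>cv e \<inter> insert l C = cv e \<inter> C\<close> by simp
    ultimately show ?thesis using inv1 e(1) by simp
  next
    case True
    then have eq: "cv e \<inter> insert l C = insert l (cv e \<inter> C)" by blast
    have lnot: "l \<notin> cv e \<inter> C" using lC by blast
    have cm: "common (cv e \<inter> insert l C) ?\<pi> = p \<inter> common (cv e \<inter> C) \<pi>"
      using eq common_upd_ins[OF lnot] by simp
    have fin: "finite (cv e \<inter> C)" using finite_cv by simp
    have "card (insert l (cv e \<inter> C)) = Suc (card (cv e \<inter> C))" using fin lnot by simp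
    then have c1: "1 \<le> card (cv e \<inter> C)" using e(2) eq by simp
    show ?thesis
    proof (cases "2 \<le> card (cv e \<inter> C)")
      case True
      then have "card (common (cv e \<inter> C) \<pi>) \<le> 1" using inv1 e(1) by blast
      moreover have "card (p \<inter> common (cv e \<inter> C) \<pi>) \<le> card (common (cv e \<inter> C) \<pi>)"
        using finite_common by (simp add: card_mono)
      ultimately show ?thesis using cm by simp
    next
      case False
      then have "card (cv e \<inter> C) = 1" using c1 by simp
      then obtain a where a: "cv e \<inter> C = {a}" by (rule card_1_singletonE)
      have "a \<in> C" using a by blast
      then have ca: "card (\<pi> a) = 2" using inv0 by blast
      have pa: "p \<noteq> \<pi> a" using consA[OF e(1) \<open>l \<in> cv e\<close> a] .
      have "p \<inter> common (cv e \<inter> C) \<pi> \<subseteq> p \<inter> \<pi> a" using common_mem[of a "cv e \<inter> C" \<pi>] a by auto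
      moreover have "card (p \<inter> \<pi> a) \<le> 1" using two_sets_inter[OF p(2) ca pa] .
      moreover have "finite (p \<inter> \<pi> a)"
      proof -
        have "finite p" using p(2) by (metis card.infinite zero_neq_numeral)
        then show ?thesis by simp
      qed
      ultimately show ?thesis using cm card_mono by (metis le_trans)
    qed
  qed
  have n2: "common (cv e) ?\<pi> = {}" if e: "e \<in> T" "cv e \<subseteq> insert l C" for e
  proof (cases "l \<in> cv e")
    case False
    then have "cv e \<subseteq> C" using e(2) by blast
    then show ?thesis using inv2 e(1) common_upd[OF False] by simp
  next
    case True
    have last: "cv e - {l} \<subseteq> C" using e(2) by blast
    have eq: "cv e = insert l (cv e \<inter> C)" using True last by blast
    have lnot: "l \<notin> cv e \<inter> C" using lC by blast
    have "common (cv e) ?\<pi> = common (insert l (cv e \<inter> C)) ?\<pi>" using eq by simp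
    also have "\<dots> = p \<inter> common (cv e \<inter> C) \<pi>" by (rule common_upd_ins[OF lnot])
    also have "\<dots> = {}" by (rule consB[OF e(1) True last])
    finally show ?thesis .
  qed
  have "Inv (insert l C) ?\<pi>" unfolding Inv_def
  proof (intro conjI)
    show "\<forall>e\<in>T. 2 \<le> card (cv e \<inter> insert l C) \<longrightarrow> card (common (cv e \<inter> insert l C) ?\<pi>) \<le> 1"
      by (intro ballI impI n1)
    show "\<forall>e\<in>T. cv e \<subseteq> insert l C \<longrightarrow> common (cv e) ?\<pi> = {}"
      by (intro ballI impI n2)
  qed (rule n0)
  then show ?thesis by (rule exI)
qed

theorem core_main:
  "\<exists>\<pi>. (\<forall>a\<in>L. \<pi> a \<subseteq> {1..5} \<and> card (\<pi> a) = 2) \<and> (\<forall>e\<in>T. common (cv e) \<pi> = {})"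
proof -
  obtain ys where ys: "distinct ys" "set ys = L" "sorted (map kap ys)"
    using sorted_list_ex[OF finL] by blast
  have "\<exists>\<pi>. Inv (set (take n ys)) \<pi>" if "n \<le> length ys" for n
    using that
  proof (induction n)
    case 0
    have "Inv {} (\<lambda>_. {})" unfolding Inv_def
    proof (intro conjI ballI impI)
      fix e assume "e \<in> T" "cv e \<subseteq> {}"
      then have "card (cv e) = 0" by simp
      moreover have "2 \<le> card (cv e)" using cv2[of e] \<open>e \<in> T\<close> unfolding cv_def by simp
      ultimately show "common (cv e) (\<lambda>_. {}) = {}" by simp
    qed auto
    then show ?case by auto
  next
    case (Suc n)
    then have n: "n < length ys" by simp
    from Suc obtain \<pi> where \<pi>: "Inv (set (take n ys)) \<pi>" by auto
    have tk: "set (take (Suc n) ys) = insert (ys!n) (set (take n ys))"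
      by (simp add: take_Suc_conv_app_nth n)
    have notin: "ys!n \<notin> set (take n ys)" by (rule nth_notin_take[OF ys(1) n])
    have sub: "set (take n ys) \<subseteq> L" using ys(2) set_take_subset by metis
    have inL: "ys!n \<in> L" using ys(2) n by auto
    have kp: "\<forall>l'\<in>set (take n ys). kap l' \<le> kap (ys!n)"
    proof
      fix l' assume "l' \<in> set (take n ys)"
      then obtain i where i: "i < n" "l' = ys ! i" using n by (auto simp: in_set_conv_nth)
      have "map kap ys ! i \<le> map kap ys ! n" using sorted_nth_mono[OF ys(3)] i(1) n by simp
      then show "kap l' \<le> kap (ys!n)" using i n by simp
    qed
    from step[OF sub inL notin kp \<pi>] show ?case using tk by metis
  qed
  from this[of "length ys"] obtain \<pi> where "Inv (set (take (length ys) ys)) \<pi>" by blast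
  then have I: "Inv L \<pi>" using ys(2) by simp
  have a: "\<forall>a\<in>L. \<pi> a \<subseteq> {1..5} \<and> card (\<pi> a) = 2" using I unfolding Inv_def by (rule conjunct1)
  have c: "\<forall>e\<in>T. cv e \<subseteq> L \<longrightarrow> common (cv e) \<pi> = {}" using I unfolding Inv_def
    by (rule conjunct2[THEN conjunct2])
  have "\<forall>e\<in>T. common (cv e) \<pi> = {}" using c by (auto simp: cv_def)
  then show ?thesis using a by blast
qed

end




fun pe :: "'a list \<Rightarrow> 'a set set" where
  "pe [] = {}"
| "pe [x] = {}"
| "pe (x # y # zs) = insert {x, y} (pe (y # zs))"

lemma path_edges_pe: "path_edges xs = pe xs"
proof (induction xs rule: pe.induct)
  case 1 then show ?case by (simp add: path_edges_def)
next
  case (2 x) then show ?case by (simp add: path_edges_def)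
next
  case (3 x y zs)
  have "path_edges (x # y # zs) = insert {x,y} (path_edges (y # zs))"
  proof
    show "path_edges (x # y # zs) \<subseteq> insert {x, y} (path_edges (y # zs))"
    proof
      fix f assume "f \<in> path_edges (x # y # zs)"
      then obtain i where i: "f = {(x#y#zs) ! i, (x#y#zs) ! Suc i}" "Suc i < length (x#y#zs)"
        unfolding path_edges_def by blast
      show "f \<in> insert {x, y} (path_edges (y # zs))"
      proof (cases i)
        case 0 then show ?thesis using i by simp
      next
        case (Suc j)
        then have "f = {(y#zs) ! j, (y#zs) ! Suc j}" "Suc j < length (y#zs)" using i by auto
        then show ?thesis unfolding path_edges_def by blast
      qed
    qed
  next
    show "insert {x, y} (path_edges (y # zs)) \<subseteq> path_edges (x # y # zs)"
    proof
      fix f assume "f \<in> insert {x, y} (path_edges (y # zs))"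
      then show "f \<in> path_edges (x # y # zs)"
      proof
        assume "f = {x,y}"
        then have "f = {(x#y#zs) ! 0, (x#y#zs) ! Suc 0}" "Suc 0 < length (x#y#zs)" by auto
        then show ?thesis unfolding path_edges_def by blast
      next
        assume "f \<in> path_edges (y # zs)"
        then obtain j where "f = {(y#zs) ! j, (y#zs) ! Suc j}" "Suc j < length (y#zs)"
          unfolding path_edges_def by blast
        then have "f = {(x#y#zs) ! Suc j, (x#y#zs) ! Suc (Suc j)}" "Suc (Suc j) < length (x#y#zs)" by auto
        then show ?thesis unfolding path_edges_def by blast
      qed
    qed
  qed
  then show ?case using 3 by simp
qed

definition walk :: "'a set set \<Rightarrow> 'a list \<Rightarrow> bool" where
  "walk F xs \<longleftrightarrow> xs \<noteq> [] \<and> pe xs \<subseteq> F"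

lemma spath_walk: "spath F xs \<longleftrightarrow> walk F xs \<and> distinct xs"
  unfolding spath_def walk_def path_edges_pe[symmetric] path_edges_def by blast

lemma pe_append: "pe (xs @ y # ys) = pe (xs @ [y]) \<union> pe (y # ys)"
  by (induction xs rule: pe.induct) auto

lemma pe_rev: "pe (rev xs) = pe xs"
proof (induction xs rule: pe.induct)
  case (3 x y zs)
  have "pe (rev (x # y # zs)) = pe (rev zs @ y # [x])" by simp
  also have "\<dots> = pe (rev zs @ [y]) \<union> pe [y, x]" by (rule pe_append)
  also have "\<dots> = pe (rev (y # zs)) \<union> {{x, y}}" by (auto simp: insert_commute)
  finally show ?case using 3 by auto
qed auto

lemma pe_sub: "f \<in> pe xs \<Longrightarrow> f \<subseteq> set xs"
  by (induction xs rule: pe.induct) auto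

lemma walk_single: "walk F [u]" by (simp add: walk_def)

lemma not_distinct_shorten:
  assumes "\<not> distinct xs"
  obtains ys where "length ys < length xs" "ys \<noteq> []" "hd ys = hd xs" "last ys = last xs"
    "pe ys \<subseteq> pe xs" "set ys \<subseteq> set xs"
proof -
  obtain as x bs cs where xs: "xs = as @ [x] @ bs @ [x] @ cs" using not_distinct_decomp[OF assms] by blast
  let ?ys = "as @ x # cs"
  have "pe xs = pe (as @ [x]) \<union> pe (x # bs @ x # cs)" using xs pe_append[of as x "bs @ x # cs"] by simp
  also have "pe (x # bs @ x # cs) = pe ((x # bs) @ [x]) \<union> pe (x # cs)"
    using pe_append[of "x # bs" x cs] by simp
  finally have "pe ?ys \<subseteq> pe xs" using pe_append[of as x cs] by auto
  moreover have "hd ?ys = hd xs" using xs by (cases as) auto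
  moreover have "last ?ys = last xs" using xs by (cases cs) auto
  moreover have "length ?ys < length xs" using xs by simp
  moreover have "set ?ys \<subseteq> set xs" using xs by auto
  ultimately show ?thesis using that[of ?ys] by simp
qed

lemma walk_to_spath:
  assumes "walk F xs"
  shows "\<exists>ys. spath F ys \<and> hd ys = hd xs \<and> last ys = last xs \<and> pe ys \<subseteq> pe xs \<and> set ys \<subseteq> set xs"
  using assms
proof (induction "length xs" arbitrary: xs rule: less_induct)
  case less
  show ?case
  proof (cases "distinct xs")
    case True then show ?thesis using less.prems spath_walk by blast
  next
    case False
    then obtain ys where ys: "length ys < length xs" "ys \<noteq> []" "hd ys = hd xs" "last ys = last xs"
      "pe ys \<subseteq> pe xs" "set ys \<subseteq> set xs" by (rule not_distinct_shorten)
    have "walk F ys" using ys less.prems unfolding walk_def by blast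
    from less.hyps[OF ys(1) this] obtain zs where
      "spath F zs" "hd zs = hd ys" "last zs = last ys" "pe zs \<subseteq> pe ys" "set zs \<subseteq> set ys" by blast
    then show ?thesis using ys by (intro exI[of _ zs]) auto
  qed
qed

lemma connected_walk: "connected_in F u v \<longleftrightarrow> (\<exists>xs. walk F xs \<and> hd xs = u \<and> last xs = v)"
  unfolding connected_in_def using walk_to_spath spath_walk by metis

lemma conn_refl: "connected_in F u u"
  unfolding connected_walk using walk_single by fastforce

lemma walk_rev: "walk F xs \<Longrightarrow> walk F (rev xs)"
  by (simp add: walk_def pe_rev)

lemma conn_sym: "connected_in F u v \<Longrightarrow> connected_in F v u"
  unfolding connected_walk using walk_rev by (metis hd_rev last_rev)

lemma walk_append:
  assumes "walk F xs" "walk F ys" "last xs = hd ys"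
  shows "walk F (xs @ tl ys) \<and> hd (xs @ tl ys) = hd xs \<and> last (xs @ tl ys) = last ys"
proof -
  obtain y ys' where ys: "ys = y # ys'" using assms(2) unfolding walk_def by (cases ys) auto
  obtain xs0 where xs: "xs = xs0 @ [y]" using assms(1,3) ys unfolding walk_def
    by (metis append_butlast_last_id list.sel(1))
  have "pe (xs @ tl ys) = pe xs \<union> pe ys" using pe_append[of xs0 y ys'] xs ys by simp
  moreover have "hd (xs0 @ y # ys') = hd (xs0 @ [y])" by (cases xs0) auto
  ultimately show ?thesis using assms xs ys unfolding walk_def by auto
qed

lemma conn_trans: "connected_in F u v \<Longrightarrow> connected_in F v w \<Longrightarrow> connected_in F u w"
  unfolding connected_walk using walk_append by metis

lemma walk_mono: "walk F xs \<Longrightarrow> F \<subseteq> F' \<Longrightarrow> walk F' xs"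
  by (auto simp: walk_def)

lemma conn_edge: "{u,v} \<in> F \<Longrightarrow> connected_in F u v"
proof -
  assume "{u,v} \<in> F"
  then have "walk F [u,v]" by (simp add: walk_def)
  then show ?thesis unfolding connected_walk by fastforce
qed

lemma walk_prefix_conn:
  assumes "walk F xs" "x \<in> set xs"
  shows "connected_in F (hd xs) x"
  using assms
proof (induction xs rule: pe.induct)
  case 1 then show ?case by simp
next
  case (2 z) then show ?case using conn_refl by simp
next
  case (3 a b zs)
  show ?case
  proof (cases "x = a")
    case True then show ?thesis using conn_refl by simp
  next
    case False
    then have "x \<in> set (b # zs)" using 3 by simp
    moreover have "walk F (b # zs)" using 3(2) by (simp add: walk_def)
    ultimately have "connected_in F b x" using 3(1) by simp
    moreover have "connected_in F a b" using 3(2) by (intro conn_edge) (simp add: walk_def)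
    ultimately have "connected_in F a x" using conn_trans[of F a b x] by blast
    then show ?thesis by simp
  qed
qed

lemma walk_edge_split:
  assumes "walk F p" "e \<in> pe p" "e = {a,b}"
  shows "connected_in (F - {e}) (hd p) a \<or> connected_in (F - {e}) (hd p) b"
  using assms
proof (induction p rule: pe.induct)
  case (3 x y zs)
  show ?case
  proof (cases "e = {x,y}")
    case True
    then have "x = a \<or> x = b" using 3(4) by (auto simp: doubleton_eq_iff)
    then show ?thesis using conn_refl by (metis list.sel(1))
  next
    case False
    then have "e \<in> pe (y # zs)" using 3(3) by simp
    moreover have "walk F (y # zs)" using 3(2) by (simp add: walk_def)
    ultimately have IH: "connected_in (F - {e}) y a \<or> connected_in (F - {e}) y b" using 3(1,4) by simp
    have "{x,y} \<in> F - {e}" using 3(2) False by (simp add: walk_def)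
    then have "connected_in (F - {e}) x y" by (rule conn_edge)
    then show ?thesis using IH conn_trans by (metis list.sel(1))
  qed
qed auto

lemma distinct_hd_last:
  assumes "distinct ys" "ys \<noteq> []" "hd ys = last ys"
  shows "ys = [hd ys]"
proof (cases ys)
  case Nil then show ?thesis using assms by simp
next
  case (Cons y ys')
  show ?thesis
  proof (cases "ys' = []")
    case True then show ?thesis using Cons by simp
  next
    case False
    then have "last ys = last ys'" "last ys' \<in> set ys'" using Cons by auto
    then show ?thesis using assms Cons by auto
  qed
qed

locale tr =
  fixes V :: "'a set" and E T :: "'a set set" and r :: 'a
  assumes G: "graph V E" and ST: "spanning_tree V E T" and rV: "r \<in> V"
begin

lemma TE: "T \<subseteq> E" using ST by (simp add: spanning_tree_def)
lemma finV: "finite V" using G by (simp add: graph_def)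
lemma edgeE: "x \<in> E \<Longrightarrow> \<exists>a b. x = {a,b} \<and> a \<noteq> b \<and> a \<in> V \<and> b \<in> V"
  using G by (simp add: graph_def)
lemma EPow: "E \<subseteq> Pow V"
proof
  fix x assume "x \<in> E"
  then obtain a b where "x = {a,b}" "a \<in> V" "b \<in> V" using edgeE by blast
  then show "x \<in> Pow V" by auto
qed
lemma finE: "finite E" using finite_subset[OF EPow] finV by simp
lemma finT: "finite T" using finite_subset[OF TE finE] .
lemma conT: "u \<in> V \<Longrightarrow> v \<in> V \<Longrightarrow> connected_in T u v" using ST by (simp add: spanning_tree_def)
lemma minT: "e \<in> T \<Longrightarrow> e = {a,b} \<Longrightarrow> \<not> connected_in (T - {e}) a b"
  using ST by (simp add: spanning_tree_def)

lemma unique: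
  assumes "spath T xs" "spath T ys" "hd xs = hd ys" "last xs = last ys"
  shows "xs = ys"
  using assms
proof (induction xs arbitrary: ys rule: pe.induct)
  case 1 then show ?case by (simp add: spath_def)
next
  case (2 x)
  then have "distinct ys" "ys \<noteq> []" "hd ys = last ys" by (auto simp: spath_def)
  then have "ys = [hd ys]" by (rule distinct_hd_last)
  then show ?case using 2 by simp
next
  case (3 x y zs)
  have dxs: "distinct (x # y # zs)" using 3(2) by (simp add: spath_def)
  have wxs: "walk T (x # y # zs)" using 3(2) spath_walk by blast
  obtain w ws where ys: "ys = w # ws" using 3(3) by (cases ys) (auto simp: spath_def)
  have w: "w = x" using 3(4) ys by simp
  show ?case
  proof (cases ws)
    case Nil
    then have "hd (x # y # zs) = last (x # y # zs)" using 3(4,5) ys by simp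
    then have "x # y # zs = [x]" using distinct_hd_last[OF dxs] by simp
    then show ?thesis by simp
  next
    case (Cons w2 ws')
    have dys: "distinct (x # w2 # ws')" using 3(3) ys w Cons by (simp add: spath_def)
    have wys: "walk T (x # w2 # ws')" using 3(3) ys w Cons spath_walk by blast
    show ?thesis
    proof (cases "w2 = y")
      case True
      have s1: "spath T (y # zs)" using 3(2) spath_walk walk_def by (auto simp: spath_def)
      have s2: "spath T (w2 # ws')" using 3(3) ys Cons by (auto simp: spath_def)
      have "y # zs = w2 # ws'"
        using 3(1)[OF s1 s2] True 3(5) ys Cons by simp
      then show ?thesis using ys w Cons by simp
    next
      case False
      define e where "e = {x,y}"
      have eT: "e \<in> T" using wxs by (simp add: walk_def e_def)
      have "e \<notin> pe (y # zs)" using dxs pe_sub e_def by fastforce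
      then have "walk (T - {e}) (y # zs)" using wxs by (auto simp: walk_def)
      then have c1: "connected_in (T - {e}) y (last (y # zs))" unfolding connected_walk
        by (metis list.sel(1))
      have "e \<notin> pe (w2 # ws')" using dys pe_sub e_def by fastforce
      moreover have "e \<noteq> {x, w2}" using False dxs by (auto simp: e_def doubleton_eq_iff)
      ultimately have "walk (T - {e}) (x # w2 # ws')" using wys by (auto simp: walk_def)
      then have c2: "connected_in (T - {e}) x (last (x # w2 # ws'))" unfolding connected_walk
        by (metis list.sel(1))
      have "last (y # zs) = last (x # w2 # ws')" using 3(5) ys w Cons by simp
      then have "connected_in (T - {e}) x y" using c1 c2 conn_sym conn_trans by metis
      then show ?thesis using minT[OF eT e_def] by simp
    qed
  qed
qed

lemma tp:
  assumes "u \<in> V" "v \<in> V"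
  shows "spath T (tree_path T u v) \<and> hd (tree_path T u v) = u \<and> last (tree_path T u v) = v"
proof -
  have ex: "\<exists>xs. spath T xs \<and> hd xs = u \<and> last xs = v" using conT[OF assms] by (simp add: connected_in_def)
  have "\<exists>!xs. spath T xs \<and> hd xs = u \<and> last xs = v"
    using ex unique by metis
  then show ?thesis unfolding tree_path_def by (rule theI')
qed

lemma tp_edge:
  assumes "e \<in> T" "u \<in> V" "v \<in> V"
  shows "e \<in> path_edges (tree_path T u v) \<longleftrightarrow> \<not> connected_in (T - {e}) u v"
proof
  let ?p = "tree_path T u v"
  have p: "spath T ?p" "hd ?p = u" "last ?p = v" using tp[OF assms(2,3)] by auto
  assume ein: "e \<in> path_edges ?p"
  show "\<not> connected_in (T - {e}) u v"
  proof
    assume "connected_in (T - {e}) u v"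
    then obtain q where q: "spath (T - {e}) q" "hd q = u" "last q = v" by (auto simp: connected_in_def)
    have "spath T q" using q(1) by (auto simp: spath_def)
    then have "q = ?p" using unique[OF _ p(1)] p(2,3) q(2,3) by simp
    then have "e \<in> pe q" using ein by (simp add: path_edges_pe)
    moreover have "pe q \<subseteq> T - {e}" using q(1) by (simp add: spath_walk walk_def)
    ultimately show False by blast
  qed
next
  let ?p = "tree_path T u v"
  have p: "spath T ?p" "hd ?p = u" "last ?p = v" using tp[OF assms(2,3)] by auto
  assume nc: "\<not> connected_in (T - {e}) u v"
  show "e \<in> path_edges ?p"
  proof (rule ccontr)
    assume "e \<notin> path_edges ?p"
    then have "walk (T - {e}) ?p" using p(1) spath_walk path_edges_pe walk_def by (metis Diff_empty subset_Diff_insert)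
    then have "connected_in (T - {e}) u v" using p unfolding connected_walk by blast
    then show False using nc by simp
  qed
qed

lemma lp:
  assumes "e \<in> T" "u \<in> V" "v \<in> V"
  shows "e \<in> link_path T {u,v} \<longleftrightarrow> \<not> connected_in (T - {e}) u v"
proof
  assume "e \<in> link_path T {u,v}"
  then obtain x y where xy: "{u,v} = {x,y}" "e \<in> path_edges (tree_path T x y)" unfolding link_path_def by blast
  then have "(x = u \<and> y = v) \<or> (x = v \<and> y = u)" by (auto simp: doubleton_eq_iff)
  then show "\<not> connected_in (T - {e}) u v"
    using xy(2) tp_edge assms conn_sym by metis
next
  assume "\<not> connected_in (T - {e}) u v"
  then have "e \<in> path_edges (tree_path T u v)" using tp_edge assms by blast
  then show "e \<in> link_path T {u,v}" unfolding link_path_def by blast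
qed

lemma two_class:
  assumes "e \<in> T" "e = {a,b}" "w \<in> V" "a \<in> V"
  shows "connected_in (T - {e}) w a \<or> connected_in (T - {e}) w b"
proof -
  let ?p = "tree_path T w a"
  have p: "spath T ?p" "hd ?p = w" "last ?p = a" using tp[OF assms(3,4)] by auto
  have wp: "walk T ?p" using p(1) spath_walk by blast
  show ?thesis
  proof (cases "e \<in> pe ?p")
    case True
    then show ?thesis using walk_edge_split[OF wp True assms(2)] p(2) by simp
  next
    case False
    then have "walk (T - {e}) ?p" using wp by (auto simp: walk_def)
    then show ?thesis using p unfolding connected_walk by blast
  qed
qed

definition Se where "Se e = {w\<in>V. \<not> connected_in (T - {e}) r w}"

lemma Se_sub: "Se e \<subseteq> V" by (auto simp: Se_def)
lemma r_notin: "r \<notin> Se e" by (simp add: Se_def conn_refl)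

lemma se_iff:
  assumes "e \<in> T" "u \<in> V" "v \<in> V"
  shows "connected_in (T - {e}) u v \<longleftrightarrow> (u \<in> Se e \<longleftrightarrow> v \<in> Se e)"
proof
  assume c: "connected_in (T - {e}) u v"
  have "connected_in (T - {e}) r u \<longleftrightarrow> connected_in (T - {e}) r v"
    using c conn_sym conn_trans by metis
  then show "u \<in> Se e \<longleftrightarrow> v \<in> Se e" using assms by (simp add: Se_def)
next
  assume iff: "u \<in> Se e \<longleftrightarrow> v \<in> Se e"
  obtain a b where ab: "e = {a,b}" "a \<noteq> b" "a \<in> V" "b \<in> V" using edgeE TE assms(1) by blast
  have ab': "e = {b,a}" using ab by auto
  show "connected_in (T - {e}) u v"
  proof (cases "u \<in> Se e")
    case False
    then have "v \<notin> Se e" using iff by simp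
    then have "connected_in (T - {e}) r u" "connected_in (T - {e}) r v" using False assms by (auto simp: Se_def)
    then show ?thesis using conn_sym conn_trans by metis
  next
    case True
    then have vS: "v \<in> Se e" using iff by simp
    have nu: "\<not> connected_in (T - {e}) r u" and nv: "\<not> connected_in (T - {e}) r v"
      using True vS by (auto simp: Se_def)
    have cr: "connected_in (T - {e}) r a \<or> connected_in (T - {e}) r b" using two_class[OF assms(1) ab(1) rV ab(3)] .
    have cu: "connected_in (T - {e}) u a \<or> connected_in (T - {e}) u b" using two_class[OF assms(1) ab(1) assms(2) ab(3)] .
    have cv: "connected_in (T - {e}) v a \<or> connected_in (T - {e}) v b" using two_class[OF assms(1) ab(1) assms(3) ab(3)] .
    from cr show ?thesis
    proof
      assume ra: "connected_in (T - {e}) r a"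
      have "\<not> connected_in (T - {e}) u a" using ra nu conn_sym conn_trans by metis
      then have ub: "connected_in (T - {e}) u b" using cu by blast
      have "\<not> connected_in (T - {e}) v a" using ra nv conn_sym conn_trans by metis
      then have vb: "connected_in (T - {e}) v b" using cv by blast
      show ?thesis using ub vb conn_sym conn_trans by metis
    next
      assume rb: "connected_in (T - {e}) r b"
      have "\<not> connected_in (T - {e}) u b" using rb nu conn_sym conn_trans by metis
      then have ua: "connected_in (T - {e}) u a" using cu by blast
      have "\<not> connected_in (T - {e}) v b" using rb nv conn_sym conn_trans by metis
      then have va: "connected_in (T - {e}) v a" using cv by blast
      show ?thesis using ua va conn_sym conn_trans by metis
    qed
  qed
qed

lemma edge_sides:
  assumes "e \<in> T" "e = {a,b}"
  shows "a \<in> V" "b \<in> V" "a \<noteq> b" "a \<in> Se e \<longleftrightarrow> b \<notin> Se e"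
proof -
  obtain x y where xy: "e = {x,y}" "x \<noteq> y" "x \<in> V" "y \<in> V" using edgeE TE assms(1) by blast
  then show "a \<in> V" "b \<in> V" "a \<noteq> b" using assms(2) by (auto simp: doubleton_eq_iff)
  then show "a \<in> Se e \<longleftrightarrow> b \<notin> Se e" using se_iff[OF assms(1), of a b] minT[OF assms] by blast
qed

end

lemma card_pair_int:
  assumes "u \<noteq> v"
  shows "card ({u,v} \<inter> S) = 1 \<longleftrightarrow> (u \<in> S \<longleftrightarrow> v \<notin> S)"
proof (cases "u \<in> S"; cases "v \<in> S")
  assume "u \<in> S" "v \<in> S" then have "{u,v} \<inter> S = {u,v}" by auto
  then show ?thesis using assms \<open>u \<in> S\<close> \<open>v \<in> S\<close> by simp
next
  assume "u \<in> S" "v \<notin> S" then have "{u,v} \<inter> S = {u}" by auto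
  then show ?thesis using \<open>u \<in> S\<close> \<open>v \<notin> S\<close> by simp
next
  assume "u \<notin> S" "v \<in> S" then have "{u,v} \<inter> S = {v}" by auto
  then show ?thesis using \<open>u \<notin> S\<close> \<open>v \<in> S\<close> by simp
next
  assume "u \<notin> S" "v \<notin> S" then have "{u,v} \<inter> S = {}" by auto
  then show ?thesis using \<open>u \<notin> S\<close> \<open>v \<notin> S\<close> by simp
qed

context tr begin

lemma cov_char:
  assumes "e \<in> T" "l \<in> E"
  shows "e \<in> link_path T l \<longleftrightarrow> card (l \<inter> Se e) = 1"
proof -
  obtain u v where uv: "l = {u,v}" "u \<noteq> v" "u \<in> V" "v \<in> V" using edgeE assms(2) by blast
  have "e \<in> link_path T l \<longleftrightarrow> \<not> connected_in (T - {e}) u v" using lp[OF assms(1) uv(3,4)] uv(1) by simp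
  also have "\<dots> \<longleftrightarrow> \<not> (u \<in> Se e \<longleftrightarrow> v \<in> Se e)" using se_iff[OF assms(1) uv(3,4)] by simp
  also have "\<dots> \<longleftrightarrow> card (l \<inter> Se e) = 1" using card_pair_int[OF uv(2)] uv(1) by simp
  finally show ?thesis .
qed

lemma lam:
  assumes eT: "e \<in> T" and fT: "f \<in> T" and ne: "Se e \<inter> Se f \<noteq> {}"
  shows "Se e \<subseteq> Se f \<or> Se f \<subseteq> Se e"
proof (cases "e = f")
  case True then show ?thesis by simp
next
  case False
  obtain c d where cd: "f = {c,d}" "c \<noteq> d" "c \<in> V" "d \<in> V" using edgeE TE fT by blast
  have "f \<in> T - {e}" using fT False by simp
  then have "connected_in (T - {e}) c d" using cd(1) conn_edge by metis
  then have cdS: "c \<in> Se e \<longleftrightarrow> d \<in> Se e" using se_iff[OF eT cd(3,4)] by simp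
  have cQ: "c \<in> set Q" if "f \<in> pe Q" for Q using pe_sub[OF that] cd(1) by blast
  show ?thesis
  proof (cases "c \<in> Se e")
    case True
    have "Se f \<subseteq> Se e"
    proof
      fix z assume z: "z \<in> Se f"
      then have zV: "z \<in> V" using Se_sub by blast
      show "z \<in> Se e"
      proof (rule ccontr)
        assume "z \<notin> Se e"
        then have "connected_in (T - {e}) r z" using zV by (simp add: Se_def)
        then obtain Q where Q: "spath (T - {e}) Q" "hd Q = r" "last Q = z" by (auto simp: connected_in_def)
        have wQ: "walk (T - {e}) Q" using Q(1) spath_walk by blast
        show False
        proof (cases "f \<in> pe Q")
          case True
          then have "connected_in (T - {e}) r c" using walk_prefix_conn[OF wQ cQ[OF True]] Q(2) by simp
          then show False using \<open>c \<in> Se e\<close> by (simp add: Se_def)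
        next
          case False
          then have "walk (T - {f}) Q" using wQ by (auto simp: walk_def)
          then have "connected_in (T - {f}) r z" using Q(2,3) unfolding connected_walk by blast
          then show False using z by (simp add: Se_def)
        qed
      qed
    qed
    then show ?thesis by simp
  next
    case False
    obtain w where w: "w \<in> Se e" "w \<in> Se f" using ne by blast
    have wV: "w \<in> V" using w Se_sub by blast
    have "Se e \<subseteq> Se f"
    proof
      fix z assume z: "z \<in> Se e"
      then have zV: "z \<in> V" using Se_sub by blast
      have "connected_in (T - {e}) w z" using se_iff[OF eT wV zV] w z by simp
      then obtain Q where Q: "spath (T - {e}) Q" "hd Q = w" "last Q = z" by (auto simp: connected_in_def)
      have wQ: "walk (T - {e}) Q" using Q(1) spath_walk by blast
      have "f \<notin> pe Q"
      proof
        assume "f \<in> pe Q"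
        then have "connected_in (T - {e}) w c" using walk_prefix_conn[OF wQ cQ] Q(2) by simp
        then have "c \<in> Se e" using se_iff[OF eT wV cd(3)] w(1) by simp
        then show False using False by simp
      qed
      then have "walk (T - {f}) Q" using wQ by (auto simp: walk_def)
      then have cwz: "connected_in (T - {f}) w z" using Q(2,3) unfolding connected_walk by blast
      show "z \<in> Se f"
      proof (rule ccontr)
        assume "z \<notin> Se f"
        then have "connected_in (T - {f}) r z" using zV by (simp add: Se_def)
        then have "connected_in (T - {f}) r w" using cwz conn_sym conn_trans by metis
        then show False using w(2) by (simp add: Se_def)
      qed
    qed
    then show ?thesis by simp
  qed
qed

lemma Se_ne: "e \<in> T \<Longrightarrow> Se e \<noteq> {}"
proof -
  assume eT: "e \<in> T"
  obtain a b where ab: "e = {a,b}" using edgeE TE eT by blast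
  show ?thesis using edge_sides[OF eT ab] by blast
qed

lemma leaf_deg:
  assumes eT: "e \<in> T" and S1: "Se e = {u}"
  shows "deg T u = 1"
proof -
  obtain a b where ab: "e = {a,b}" using edgeE TE eT by blast
  have "u \<in> e" using edge_sides[OF eT ab] S1 ab by auto
  have "{f\<in>T. u \<in> f} = {e}"
  proof
    show "{e} \<subseteq> {f\<in>T. u \<in> f}" using eT \<open>u \<in> e\<close> by simp
  next
    show "{f\<in>T. u \<in> f} \<subseteq> {e}"
    proof
      fix f assume f: "f \<in> {f\<in>T. u \<in> f}"
      show "f \<in> {e}"
      proof (rule ccontr)
        assume "f \<notin> {e}"
        then have fe: "f \<in> T - {e}" using f by simp
        obtain c d where cd: "f = {c,d}" "c \<noteq> d" "c \<in> V" "d \<in> V" using edgeE TE f by blast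
        obtain w where w: "f = {u,w}" "w \<noteq> u" "w \<in> V" using cd f by auto
        have uV: "u \<in> V" using S1 Se_sub by blast
        have "connected_in (T - {e}) u w" using fe w(1) conn_edge by metis
        then have "w \<in> Se e" using se_iff[OF eT uV w(3)] S1 by simp
        then show False using S1 w(2) by simp
      qed
    qed
  qed
  then show ?thesis by (simp add: deg_def)
qed

lemma cut_eq:
  assumes eT: "e \<in> T"
  shows "cut E (Se e) = insert e {l\<in>E - T. card (l \<inter> Se e) = 1}"
proof -
  have inT: "card (x \<inter> Se e) = 1 \<longleftrightarrow> x = e" if x: "x \<in> T" for x
  proof -
    obtain c d where cd: "x = {c,d}" using edgeE TE x by blast
    have s: "c \<in> V" "d \<in> V" "c \<noteq> d" using edge_sides[OF x cd] by auto
    show ?thesis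
    proof
      assume "card (x \<inter> Se e) = 1"
      then have "c \<in> Se e \<longleftrightarrow> d \<notin> Se e" using card_pair_int[OF s(3)] cd by simp
      then have "\<not> connected_in (T - {e}) c d" using se_iff[OF eT s(1,2)] by simp
      then show "x = e" using conn_edge[of c d "T - {e}"] cd x by blast
    next
      assume "x = e"
      then show "card (x \<inter> Se e) = 1" using edge_sides[OF eT, of c d] cd card_pair_int[OF s(3)] by simp
    qed
  qed
  show ?thesis unfolding cut_def using inT eT TE by auto
qed

lemma cov_count:
  assumes eT: "e \<in> T" and ess: "ess_4_edge_connected V E" and md: "min_degree_ge V E 3"
  shows "2 \<le> card {l\<in>E - T. card (l \<inter> Se e) = 1}"
    "card {l\<in>E - T. card (l \<inter> Se e) = 1} = 2 \<Longrightarrow> card (Se e) = 1 \<or> Se e = V - {r}"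
proof -
  let ?K = "{l\<in>E - T. card (l \<inter> Se e) = 1}"
  have finK: "finite ?K" using finE by simp
  have cK: "card (cut E (Se e)) = Suc (card ?K)" using cut_eq[OF eT] finK eT by simp
  have finS: "finite (Se e)" using Se_sub finV finite_subset by blast
  have cases3: "(card (Se e) = 1) \<or> (Se e = V - {r}) \<or> (2 \<le> card (Se e) \<and> card (Se e) \<le> card V - 2)"
  proof -
    have "card (Se e) \<noteq> 0" using Se_ne[OF eT] finS by simp
    moreover have "Se e \<subseteq> V - {r}" using Se_sub r_notin by blast
    moreover have "card (V - {r}) = card V - 1" using rV finV by simp
    moreover have "card (Se e) \<ge> card V - 1 \<Longrightarrow> Se e = V - {r}"
      using card_subset_eq[of "V - {r}" "Se e"] finV \<open>Se e \<subseteq> V - {r}\<close> \<open>card (V - {r}) = card V - 1\<close>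
      by (metis card_mono finite_Diff le_antisym)
    ultimately show ?thesis by linarith
  qed
  have big: "3 \<le> card ?K" if "2 \<le> card (Se e) \<and> card (Se e) \<le> card V - 2"
  proof -
    have "4 \<le> card (cut E (Se e))" using ess that Se_sub unfolding ess_4_edge_connected_def by blast
    then show ?thesis using cK by simp
  qed
  have single: "2 \<le> card ?K" if c1: "card (Se e) = 1"
  proof -
    obtain u where u: "Se e = {u}" using c1 by (rule card_1_singletonE)
    have uV: "u \<in> V" using u Se_sub by blast
    have "cut E (Se e) = {x\<in>E. u \<in> x}" unfolding cut_def u
    proof (intro Collect_cong conj_cong refl)
      fix x show "card (x \<inter> {u}) = 1 \<longleftrightarrow> u \<in> x" by (cases "u \<in> x") auto
    qed
    then have "card (cut E (Se e)) = deg E u" by (simp add: deg_def)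
    moreover have "deg E u \<ge> 3" using md uV by (simp add: min_degree_ge_def)
    ultimately show ?thesis using cK by simp
  qed
  have whole: "2 \<le> card ?K" if wh: "Se e = V - {r}"
  proof -
    have "cut E (Se e) = {x\<in>E. r \<in> x}" unfolding cut_def wh
    proof (intro Collect_cong)
      fix x show "(x \<in> E \<and> card (x \<inter> (V - {r})) = 1) \<longleftrightarrow> (x \<in> E \<and> r \<in> x)"
      proof (cases "x \<in> E")
        case True
        obtain c d where cd: "x = {c,d}" "c \<noteq> d" "c \<in> V" "d \<in> V" using edgeE True by blast
        have "card (x \<inter> (V - {r})) = 1 \<longleftrightarrow> r \<in> x"
        proof (cases "c = r"; cases "d = r")
          assume "c = r" "d = r" then show ?thesis using cd by simp
        next
          assume "c = r" "d \<noteq> r" then have "x \<inter> (V - {r}) = {d}" using cd by auto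
          then show ?thesis using cd \<open>c = r\<close> by simp
        next
          assume "c \<noteq> r" "d = r" then have "x \<inter> (V - {r}) = {c}" using cd by auto
          then show ?thesis using cd \<open>d = r\<close> by simp
        next
          assume "c \<noteq> r" "d \<noteq> r" then have "x \<inter> (V - {r}) = {c,d}" using cd by auto
          then show ?thesis using cd \<open>c \<noteq> r\<close> \<open>d \<noteq> r\<close> by simp
        qed
        then show ?thesis using True by simp
      qed simp
    qed
    then have "card (cut E (Se e)) = deg E r" by (simp add: deg_def)
    moreover have "deg E r \<ge> 3" using md rV by (simp add: min_degree_ge_def)
    ultimately show ?thesis using cK by simp
  qed
  show "2 \<le> card ?K" using cases3 single whole big by force
  show "card (Se e) = 1 \<or> Se e = V - {r}" if "card ?K = 2" using cases3 big that by force
qed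

lemma leaf_cond:
  assumes ess: "ess_4_edge_connected V E" and md: "min_degree_ge V E 3"
    and nlm: "\<forall>l\<in>E - T. \<not> leaf_matching_link T r l"
    and eT: "e \<in> T" and fT: "f \<in> T" and lL: "l \<in> E - T"
    and ce: "card (l \<inter> Se e) = 1" and cf: "card (l \<inter> Se f) = 1"
    and ke: "card {l\<in>E - T. card (l \<inter> Se e) = 1} = 2" and kf: "card {l\<in>E - T. card (l \<inter> Se f) = 1} = 2"
  shows "l \<inter> Se e = l \<inter> Se f"
proof -
  obtain u v where uv: "l = {u,v}" "u \<noteq> v" "u \<in> V" "v \<in> V" using edgeE lL by blast
  have finl: "finite l" using uv by simp
  have se: "card (Se e) = 1 \<or> Se e = V - {r}" using cov_count(2)[OF eT ess md ke] .
  have sf: "card (Se f) = 1 \<or> Se f = V - {r}" using cov_count(2)[OF fT ess md kf] .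
  have sub_whole: "l \<inter> Se g \<subseteq> l \<inter> Se h" if "Se h = V - {r}" for g h
    using that Se_sub r_notin uv by blast
  have eqc: "A = B" if "A \<subseteq> B" "card A = 1" "card B = 1" for A B :: "'a set"
    using that card_subset_eq by (metis card.infinite zero_neq_one)
  show ?thesis
  proof (cases "Se e = V - {r}")
    case True
    show ?thesis using eqc[OF sub_whole[OF True] cf ce] by simp
  next
    case Fe: False
    show ?thesis
    proof (cases "Se f = V - {r}")
      case True
      show ?thesis using eqc[OF sub_whole[OF True] ce cf] .
    next
      case False
      obtain x where x: "Se e = {x}" using se Fe by (metis card_1_singletonE)
      obtain y where y: "Se f = {y}" using sf False by (metis card_1_singletonE)
      have xl: "x \<in> l" using ce x by (metis card.empty disjoint_insert(2) inf_bot_right zero_neq_one)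
      have yl: "y \<in> l" using cf y by (metis card.empty disjoint_insert(2) inf_bot_right zero_neq_one)
      show ?thesis
      proof (cases "x = y")
        case True then show ?thesis using x y by simp
      next
        case False
        then have lxy: "l = {x,y}" using xl yl uv by auto
        have "deg T x = 1" using leaf_deg[OF eT x] .
        moreover have "deg T y = 1" using leaf_deg[OF fT y] .
        moreover have "x \<noteq> r" "y \<noteq> r" using r_notin x y by auto
        ultimately have "leaf_matching_link T r l" unfolding leaf_matching_link_def using lxy by blast
        then show ?thesis using nlm lL by blast
      qed
    qed
  qed
qed

end




lemma lca_sym: "lca T r u v = lca T r v u"
  unfolding lca_def by (simp add: conj_ac)

definition lkey :: "'a set set \<Rightarrow> 'a \<Rightarrow> 'a set \<Rightarrow> nat" where
  "lkey T r l = (let p = (SOME p. l = {fst p, snd p}) in depth T r (lca T r (fst p) (snd p)))"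

lemma lkey_eq: "l = {u,v} \<Longrightarrow> lkey T r l = depth T r (lca T r u v)"
proof -
  assume l: "l = {u,v}"
  let ?p = "SOME p. l = {fst p, snd p}"
  have s: "l = {fst ?p, snd ?p}" by (rule someI[of _ "(u,v)"]) (simp add: l)
  obtain a b where ab: "?p = (a,b)" by (cases ?p)
  have "{a,b} = {u,v}" using s ab l by simp
  then have o: "(a = u \<and> b = v) \<or> (a = v \<and> b = u)" by (simp add: doubleton_eq_iff)
  have "lkey T r l = depth T r (lca T r a b)" unfolding lkey_def Let_def ab by simp
  then show ?thesis using o lca_sym[of T r u v] by auto
qed

lemma higher_key: "higher_lca T r l' l \<Longrightarrow> lkey T r l' < lkey T r l"
  unfolding higher_lca_def using lkey_eq by metis

theorem lemma7:
  fixes V :: "'a set" and E T :: "'a set set" and r :: 'a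
  assumes "graph V E"
    and "ess_4_edge_connected V E"
    and "min_degree_ge V E 3"
    and "spanning_tree V E T"
    and "r \<in> V"
    and "\<forall>l\<in>E - T. \<not> leaf_matching_link T r l"
  shows "\<exists>ord col. admissible_top_down_coloring T r (E - T) 3 5 ord col"
proof -
  interpret G: tr V E T r using assms(1,4,5) by unfold_locales
  interpret C: core "E - T" T G.Se
  proof
    show "finite (E - T)" using G.finE by simp
    show "finite T" by (rule G.finT)
    show "\<exists>u v. l = {u, v} \<and> u \<noteq> v" if "l \<in> E - T" for l using G.edgeE that by blast
    show "G.Se e \<subseteq> G.Se f \<or> G.Se f \<subseteq> G.Se e" if "e \<in> T" "f \<in> T" "G.Se e \<inter> G.Se f \<noteq> {}" for e f
      using G.lam that by blast
    show "2 \<le> card {l \<in> E - T. card (l \<inter> G.Se e) = 1}" if "e \<in> T" for e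
      using G.cov_count(1)[OF that assms(2,3)] .
    show "l \<inter> G.Se e = l \<inter> G.Se f"
      if "e \<in> T" "f \<in> T" "l \<in> E - T" "card (l \<inter> G.Se e) = 1" "card (l \<inter> G.Se f) = 1"
        "card {l \<in> E - T. card (l \<inter> G.Se e) = 1} = 2" "card {l \<in> E - T. card (l \<inter> G.Se f) = 1} = 2"
      for l e f
      using G.leaf_cond[OF assms(2,3,6) that] .
  qed
  obtain \<pi> where \<pi>: "\<forall>a\<in>E - T. \<pi> a \<subseteq> {1..5} \<and> card (\<pi> a) = 2" "\<forall>e\<in>T. C.common (C.cv e) \<pi> = {}"
    using C.core_main by blast
  define L where "L = E - T"
  have covcv: "cov T L e = C.cv e" if "e \<in> T" for e
    unfolding cov_def C.cv_def L_def using G.cov_char[OF that] by auto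
  define col where "col l = {1..5} - \<pi> l" for l
  have colL: "col l \<subseteq> {1..5} \<and> card (col l) = 3" if "l \<in> L" for l
  proof -
    have "\<pi> l \<subseteq> {1..5}" "card (\<pi> l) = 2" using \<pi>(1) that L_def by auto
    then show ?thesis unfolding col_def by (simp add: card_Diff_subset finite_subset)
  qed
  have cover: "(\<Union>l\<in>cov T L e. col l) = {1..5}" if "e \<in> T" for e
  proof
    show "(\<Union>l\<in>cov T L e. col l) \<subseteq> {1..5}" unfolding col_def by blast
  next
    show "{1..5} \<subseteq> (\<Union>l\<in>cov T L e. col l)"
    proof
      fix c :: nat assume c: "c \<in> {1..5}"
      have "c \<notin> C.common (C.cv e) \<pi>" using \<pi>(2) that by blast
      then obtain a where "a \<in> C.cv e" "c \<notin> \<pi> a" using c unfolding C.common_def by blast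
      then show "c \<in> (\<Union>l\<in>cov T L e. col l)" using covcv[OF that] c unfolding col_def by blast
    qed
  qed
  have finL: "finite L" using G.finE L_def by simp
  obtain ord where ord: "distinct ord" "set ord = L" "sorted (map (lkey T r) ord)"
    using sorted_list_ex[OF finL] by blast
  have nc: "naive_coloring L 3 5 ord col" unfolding naive_coloring_def using ord colL by blast
  have td: "top_down T r ord" unfolding top_down_def
  proof (intro allI impI)
    fix i j assume ij: "i < length ord \<and> j < length ord \<and> higher_lca T r (ord ! i) (ord ! j)"
    have lt: "lkey T r (ord ! i) < lkey T r (ord ! j)" using higher_key[of T r "ord ! i" "ord ! j"] ij by simp
    show "i < j"
    proof (rule ccontr)
      assume "\<not> i < j"
      then have "map (lkey T r) ord ! j \<le> map (lkey T r) ord ! i"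
        using sorted_nth_mono[OF ord(3), of j i] ij by simp
      then show False using lt ij by simp
    qed
  qed
  have ad: "admissible T L 5 ord col" unfolding admissible_def
  proof (intro ballI allI impI)
    fix e k assume e: "e \<in> T" and k: "k \<le> length ord" and sub: "cov T L e \<subseteq> set (take k ord)"
    have "cov T L e \<inter> set (take k ord) = cov T L e" using sub by blast
    then show "received T L col (set (take k ord)) e = {1..5}"
      unfolding received_def using cover[OF e] by simp
  qed
  have "admissible_top_down_coloring T r L 3 5 ord col"
    unfolding admissible_top_down_coloring_def using nc td ad by blast
  then show ?thesis unfolding L_def by blast
qed


end
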